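(* Let $F$ be a number field and $R$ an order in $F$. Let $G$ be a finite group, $H$ a finite subgroup of $\mathcal{V}(RG)$, and $x\in RG$. (i) The shifted bicyclic maps $\psi_{H,x}$ and $\psi_{x,H}$ are injective group morphisms $H\to\mathcal{U}(RG)$. (ii) The subgroups $H$, $\psi_{H,x}(H)$ and $\psi_{x,H}(H)$ are conjugate in $\mathcal{U}(FG)$. (iii) If moreover $H\le G$ and $g\in G$, then $\psi_{H,g}$ and $\psi_{g^{-1},H}$ restrict to the identity on $H\cap H^g$, and $\psi_{H,g}(H)\cap\psi_{g^{-1},H}(H)=H\cap H^g$.
   Context: $\mathcal{V}(RG)$ is the group of units of $RG$ of augmentation $1$. For a finite subgroup $H$ put $\widetilde{H}=\sum_{h\in H}h$. The shifted bicyclic maps are $\psi_{H,x}:H\to\mathcal{U}(RG)$, $h\mapsto h+\widetilde{H}x(1-h)$, and $\psi_{x,H}:H\to\mathcal{U}(RG)$, $h\mapsto h+(1-h)x\widetilde{H}$. $H^g=g^{-1}Hg$. *)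

theory Defs
  imports Complex_Main "HOL-Algebra.Algebra"
begin

definition number_field :: "'f::field_char_0 itself \<Rightarrow> bool" where
  "number_field _ \<longleftrightarrow>
     (\<exists>B::'f set. finite B \<and> (\<forall>x::'f. \<exists>c. x = (\<Sum>b\<in>B. of_rat (c b) * b)))"

definition is_order :: "'f::field_char_0 set \<Rightarrow> bool" where
  "is_order R \<longleftrightarrow>
     0 \<in> R \<and> 1 \<in> R \<and>
     (\<forall>a\<in>R. \<forall>b\<in>R. a + b \<in> R \<and> a * b \<in> R \<and> - a \<in> R) \<and>
     (\<exists>B. finite B \<and> B \<subseteq> R \<and> R = {\<Sum>b\<in>B. of_int (c b) * b | c. True}) \<and>
     (\<exists>B. finite B \<and> B \<subseteq> R \<and> (\<forall>x::'f. \<exists>c. x = (\<Sum>b\<in>B. of_rat (c b) * b)))"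

text \<open>Elements of the group ring AG of a finite group G (HOL-Algebra) with coefficients
in a set A of a commutative ring are functions G -> A, extended by 0 outside G.\<close>

definition gr_carrier :: "('g,'b) monoid_scheme \<Rightarrow> 'f::comm_ring_1 set \<Rightarrow> ('g \<Rightarrow> 'f) set" where
  "gr_carrier G A = {a. (\<forall>g\<in>carrier G. a g \<in> A) \<and> (\<forall>g. g \<notin> carrier G \<longrightarrow> a g = 0)}"

definition gr_mult :: "('g,'b) monoid_scheme \<Rightarrow> ('g \<Rightarrow> 'f::comm_ring_1) \<Rightarrow> ('g \<Rightarrow> 'f) \<Rightarrow> ('g \<Rightarrow> 'f)" where
  "gr_mult G a b = (\<lambda>k. if k \<in> carrier G
      then (\<Sum>h\<in>carrier G. a h * b (inv\<^bsub>G\<^esub> h \<otimes>\<^bsub>G\<^esub> k)) else 0)"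

definition gr_one :: "('g,'b) monoid_scheme \<Rightarrow> ('g \<Rightarrow> 'f::comm_ring_1)" where
  "gr_one G = (\<lambda>k. if k = \<one>\<^bsub>G\<^esub> then 1 else 0)"

definition gr_add :: "('g \<Rightarrow> 'f::comm_ring_1) \<Rightarrow> ('g \<Rightarrow> 'f) \<Rightarrow> ('g \<Rightarrow> 'f)" where
  "gr_add a b = (\<lambda>k. a k + b k)"

definition gr_diff :: "('g \<Rightarrow> 'f::comm_ring_1) \<Rightarrow> ('g \<Rightarrow> 'f) \<Rightarrow> ('g \<Rightarrow> 'f)" where
  "gr_diff a b = (\<lambda>k. a k - b k)"

definition group_ring :: "('g,'b) monoid_scheme \<Rightarrow> 'f::comm_ring_1 set \<Rightarrow> ('g \<Rightarrow> 'f) ring" where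
  "group_ring G A = \<lparr>carrier = gr_carrier G A, Group.monoid.mult = gr_mult G, Group.monoid.one = gr_one G,
                     Ring.ring.zero = (\<lambda>_. 0), Ring.ring.add = gr_add\<rparr>"

definition gr_of :: "('g,'b) monoid_scheme \<Rightarrow> 'g \<Rightarrow> ('g \<Rightarrow> 'f::comm_ring_1)" where
  "gr_of G g = (\<lambda>k. if k = g then 1 else 0)"

definition augmentation :: "('g,'b) monoid_scheme \<Rightarrow> ('g \<Rightarrow> 'f::comm_ring_1) \<Rightarrow> 'f" where
  "augmentation G a = (\<Sum>g\<in>carrier G. a g)"

definition gr_V :: "('g,'b) monoid_scheme \<Rightarrow> 'f::comm_ring_1 set \<Rightarrow> ('g \<Rightarrow> 'f) set" where
  "gr_V G A = {u \<in> Units (group_ring G A). augmentation G u = 1}"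

definition tilde :: "('g \<Rightarrow> 'f::comm_ring_1) set \<Rightarrow> ('g \<Rightarrow> 'f)" where
  "tilde H = (\<lambda>k. \<Sum>h\<in>H. h k)"

definition psi_left :: "('g,'b) monoid_scheme \<Rightarrow> ('g \<Rightarrow> 'f::comm_ring_1) set \<Rightarrow> ('g \<Rightarrow> 'f)
    \<Rightarrow> ('g \<Rightarrow> 'f) \<Rightarrow> ('g \<Rightarrow> 'f)" where
  "psi_left G H x h = gr_add h (gr_mult G (gr_mult G (tilde H) x) (gr_diff (gr_one G) h))"

definition psi_right :: "('g,'b) monoid_scheme \<Rightarrow> ('g \<Rightarrow> 'f::comm_ring_1) \<Rightarrow> ('g \<Rightarrow> 'f) set
    \<Rightarrow> ('g \<Rightarrow> 'f) \<Rightarrow> ('g \<Rightarrow> 'f)" where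
  "psi_right G x H h = gr_add h (gr_mult G (gr_mult G (gr_diff (gr_one G) h) x) (tilde H))"

end

theory Submission
  imports Defs
begin


definition gz :: "('g,'b) monoid_scheme \<Rightarrow> ('g \<Rightarrow> 'f::comm_ring_1) \<Rightarrow> bool" where
  "gz G a \<longleftrightarrow> (\<forall>g. g \<notin> carrier G \<longrightarrow> a g = 0)"

definition smul :: "'f::comm_ring_1 \<Rightarrow> ('g \<Rightarrow> 'f) \<Rightarrow> ('g \<Rightarrow> 'f)" where
  "smul c a = (\<lambda>k. c * a k)"

locale fgroup = group + assumes fin: "finite (carrier G)"

context fgroup begin

lemma gr_assoc:
  shows "gr_mult G (gr_mult G a b) c = gr_mult G a (gr_mult G b c)"
proof (rule ext)
  fix k
  show "gr_mult G (gr_mult G a b) c k = gr_mult G a (gr_mult G b c) k"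
  proof (cases "k \<in> carrier G")
    case False then show ?thesis by (simp add: gr_mult_def)
  next
    case True
    have "gr_mult G (gr_mult G a b) c k
        = (\<Sum>h\<in>carrier G. (\<Sum>j\<in>carrier G. a j * b (inv j \<otimes> h)) * c (inv h \<otimes> k))"
      using True by (simp add: gr_mult_def)
    also have "\<dots> = (\<Sum>j\<in>carrier G. a j * (\<Sum>h\<in>carrier G. b (inv j \<otimes> h) * c (inv h \<otimes> k)))"
      by (simp only: sum_distrib_left sum_distrib_right mult.assoc) (rule sum.swap)
    also have "\<dots> = (\<Sum>j\<in>carrier G. a j * (\<Sum>l\<in>carrier G. b l * c (inv l \<otimes> (inv j \<otimes> k))))"
    proof (rule sum.cong[OF refl])
      fix j assume j: "j \<in> carrier G"
      have bij: "bij_betw (\<lambda>l. j \<otimes> l) (carrier G) (carrier G)"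
        unfolding bij_betw_def using j surj_const_mult[OF j]
        by (auto simp: inj_on_def)
      have "(\<Sum>h\<in>carrier G. b (inv j \<otimes> h) * c (inv h \<otimes> k))
          = (\<Sum>l\<in>carrier G. b (inv j \<otimes> (j \<otimes> l)) * c (inv (j \<otimes> l) \<otimes> k))"
        using sum.reindex_bij_betw[OF bij, of "\<lambda>h. b (inv j \<otimes> h) * c (inv h \<otimes> k)"] by simp
      also have "\<dots> = (\<Sum>l\<in>carrier G. b l * c (inv l \<otimes> (inv j \<otimes> k)))"
      proof (intro sum.cong refl)
        fix l assume l: "l \<in> carrier G"
        have "inv j \<otimes> (j \<otimes> l) = l" using j l by (simp add: m_assoc[symmetric])
        moreover have "inv (j \<otimes> l) \<otimes> k = inv l \<otimes> (inv j \<otimes> k)"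
          using j l True by (simp add: inv_mult_group m_assoc)
        ultimately show "b (inv j \<otimes> (j \<otimes> l)) * c (inv (j \<otimes> l) \<otimes> k) = b l * c (inv l \<otimes> (inv j \<otimes> k))" by simp
      qed
      finally show "a j * (\<Sum>h\<in>carrier G. b (inv j \<otimes> h) * c (inv h \<otimes> k))
          = a j * (\<Sum>l\<in>carrier G. b l * c (inv l \<otimes> (inv j \<otimes> k)))" by simp
    qed
    also have "\<dots> = gr_mult G a (gr_mult G b c) k"
      using True by (simp add: gr_mult_def)
    finally show ?thesis .
  qed
qed

lemma gr_mult_gz[simp]: "gz G (gr_mult G a b)"
  by (simp add: gz_def gr_mult_def)

lemma gr_add_gz[simp]: "gz G a \<Longrightarrow> gz G b \<Longrightarrow> gz G (gr_add a b)"
  by (simp add: gz_def gr_add_def)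

lemma gr_diff_gz[simp]: "gz G a \<Longrightarrow> gz G b \<Longrightarrow> gz G (gr_diff a b)"
  by (simp add: gz_def gr_diff_def)

lemma smul_gz[simp]: "gz G a \<Longrightarrow> gz G (smul c a)"
  by (simp add: gz_def smul_def)

lemma gr_one_gz[simp]: "gz G (gr_one G)"
  by (simp add: gz_def gr_one_def)

lemma gr_of_gz[simp]: "a \<in> carrier G \<Longrightarrow> gz G (gr_of G a)"
  by (auto simp add: gz_def gr_of_def)

lemma gr_add_left: "gr_mult G (gr_add a b) c = gr_add (gr_mult G a c) (gr_mult G b c)"
  by (auto simp add: gr_mult_def gr_add_def fun_eq_iff algebra_simps sum.distrib)

lemma gr_add_right: "gr_mult G c (gr_add a b) = gr_add (gr_mult G c a) (gr_mult G c b)"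
  by (auto simp add: gr_mult_def gr_add_def fun_eq_iff algebra_simps sum.distrib)

lemma gr_diff_left: "gr_mult G (gr_diff a b) c = gr_diff (gr_mult G a c) (gr_mult G b c)"
  by (auto simp add: gr_mult_def gr_diff_def fun_eq_iff algebra_simps sum_subtractf)

lemma gr_diff_right: "gr_mult G c (gr_diff a b) = gr_diff (gr_mult G c a) (gr_mult G c b)"
  by (auto simp add: gr_mult_def gr_diff_def fun_eq_iff algebra_simps sum_subtractf)

lemma smul_left: "gr_mult G (smul r a) c = smul r (gr_mult G a c)"
  by (auto simp add: gr_mult_def smul_def fun_eq_iff algebra_simps sum_distrib_left)

lemma smul_right: "gr_mult G c (smul r a) = smul r (gr_mult G c a)"
  by (auto simp add: gr_mult_def smul_def fun_eq_iff algebra_simps sum_distrib_left)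

lemma sum_left: "finite S \<Longrightarrow> gr_mult G (\<lambda>k. \<Sum>j\<in>S. f j k) b = (\<lambda>k. \<Sum>j\<in>S. gr_mult G (f j) b k)"
proof (rule ext)
  fix k assume S: "finite S"
  show "gr_mult G (\<lambda>k. \<Sum>j\<in>S. f j k) b k = (\<Sum>j\<in>S. gr_mult G (f j) b k)"
  proof (cases "k \<in> carrier G")
    case True
    then show ?thesis unfolding gr_mult_def
      by (simp only: if_True sum_distrib_right) (rule sum.swap)
  qed (simp add: gr_mult_def)
qed

lemma sum_right: "finite S \<Longrightarrow> gr_mult G b (\<lambda>k. \<Sum>j\<in>S. f j k) = (\<lambda>k. \<Sum>j\<in>S. gr_mult G b (f j) k)"
proof (rule ext)
  fix k assume S: "finite S"
  show "gr_mult G b (\<lambda>k. \<Sum>j\<in>S. f j k) k = (\<Sum>j\<in>S. gr_mult G b (f j) k)"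
  proof (cases "k \<in> carrier G")
    case True
    then show ?thesis unfolding gr_mult_def
      by (simp only: if_True sum_distrib_left) (rule sum.swap)
  qed (simp add: gr_mult_def)
qed

lemma gr_of_left: "a \<in> carrier G \<Longrightarrow> gr_mult G (gr_of G a) f = (\<lambda>k. if k \<in> carrier G then f (inv a \<otimes> k) else 0)"
proof (rule ext)
  fix k assume a: "a \<in> carrier G"
  show "gr_mult G (gr_of G a) f k = (if k \<in> carrier G then f (inv a \<otimes> k) else 0)"
  proof (cases "k \<in> carrier G")
    case True
    have "(\<Sum>h\<in>carrier G. gr_of G a h * f (inv h \<otimes> k)) = (\<Sum>h\<in>carrier G. if h = a then f (inv a \<otimes> k) else 0)"
      by (intro sum.cong refl) (simp add: gr_of_def)
    also have "\<dots> = f (inv a \<otimes> k)" using True a by (simp add: sum.delta fin)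
    finally show ?thesis using True by (simp add: gr_mult_def)
  qed (simp add: gr_mult_def)
qed

lemma gr_of_right: "b \<in> carrier G \<Longrightarrow> gr_mult G f (gr_of G b) = (\<lambda>k. if k \<in> carrier G then f (k \<otimes> inv b) else 0)"
proof (rule ext)
  fix k assume b: "b \<in> carrier G"
  show "gr_mult G f (gr_of G b) k = (if k \<in> carrier G then f (k \<otimes> inv b) else 0)"
  proof (cases "k \<in> carrier G")
    case True
    have "(\<Sum>h\<in>carrier G. f h * gr_of G b (inv h \<otimes> k)) = (\<Sum>h\<in>carrier G. if h = k \<otimes> inv b then f h else 0)"
    proof (intro sum.cong refl)
      fix h assume h: "h \<in> carrier G"
      have "(inv h \<otimes> k = b) = (h = k \<otimes> inv b)"
        using h b True by (metis inv_closed inv_inv inv_solve_left inv_solve_right m_closed)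
      then show "f h * gr_of G b (inv h \<otimes> k) = (if h = k \<otimes> inv b then f h else 0)"
        by (simp add: gr_of_def)
    qed
    also have "\<dots> = f (k \<otimes> inv b)" using True b by (simp add: sum.delta fin)
    finally show ?thesis using True by (simp add: gr_mult_def)
  qed (simp add: gr_mult_def)
qed

lemma gr_one_of: "gr_one G = gr_of G \<one>"
  by (simp add: gr_one_def gr_of_def)

lemma gr_one_left: "gz G a \<Longrightarrow> gr_mult G (gr_one G) a = a"
  by (auto simp add: gr_one_of gr_of_left fun_eq_iff gz_def)

lemma gr_one_right: "gz G a \<Longrightarrow> gr_mult G a (gr_one G) = a"
  by (auto simp add: gr_one_of gr_of_right fun_eq_iff gz_def)

lemma gr_of_mult: "a \<in> carrier G \<Longrightarrow> b \<in> carrier G \<Longrightarrow> gr_mult G (gr_of G a) (gr_of G b) = gr_of G (a \<otimes> b)"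
proof -
  assume a: "a \<in> carrier G" and b: "b \<in> carrier G"
  have "\<And>k. k \<in> carrier G \<Longrightarrow> (inv a \<otimes> k = b) = (k = a \<otimes> b)"
    using a b by (metis inv_solve_left m_closed)
  then show ?thesis using a b unfolding gr_of_left[OF a] by (auto simp add: fun_eq_iff gr_of_def)
qed

lemma gr_zero_left[simp]: "gr_mult G (\<lambda>_. 0) b = (\<lambda>_. 0)"
  by (simp add: gr_mult_def fun_eq_iff)

lemma gr_zero_right[simp]: "gr_mult G b (\<lambda>_. 0) = (\<lambda>_. 0)"
  by (simp add: gr_mult_def fun_eq_iff)

lemma gr_carrier_UNIV: "gr_carrier G UNIV = {a. gz G a}"
  by (simp add: gr_carrier_def gz_def)

lemma gz_carrier: "a \<in> gr_carrier G A \<Longrightarrow> gz G a"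
  by (simp add: gr_carrier_def gz_def)

end

definition closedR :: "'f::comm_ring_1 set \<Rightarrow> bool" where
  "closedR A \<longleftrightarrow> 0 \<in> A \<and> 1 \<in> A \<and> (\<forall>a\<in>A. \<forall>b\<in>A. a + b \<in> A \<and> a * b \<in> A \<and> - a \<in> A)"

lemma closedR_sum: "closedR A \<Longrightarrow> (\<And>j. j \<in> S \<Longrightarrow> f j \<in> A) \<Longrightarrow> sum f S \<in> A"
proof (induction S rule: infinite_finite_induct)
  case (infinite S) then show ?case by (simp add: closedR_def)
next
  case empty then show ?case by (simp add: closedR_def)
next
  case (insert x F) then show ?case by (simp add: closedR_def)
qed

lemma closedR_UNIV: "closedR UNIV" by (simp add: closedR_def)

context fgroup begin

lemma gr_mult_carrier: "closedR A \<Longrightarrow> a \<in> gr_carrier G A \<Longrightarrow> b \<in> gr_carrier G A \<Longrightarrow> gr_mult G a b \<in> gr_carrier G A"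
  unfolding gr_carrier_def gr_mult_def
  by (auto intro!: closedR_sum) (auto simp: closedR_def)

lemma gr_add_carrier: "closedR A \<Longrightarrow> a \<in> gr_carrier G A \<Longrightarrow> b \<in> gr_carrier G A \<Longrightarrow> gr_add a b \<in> gr_carrier G A"
  unfolding gr_carrier_def gr_add_def closedR_def by auto

lemma gr_diff_carrier: "closedR A \<Longrightarrow> a \<in> gr_carrier G A \<Longrightarrow> b \<in> gr_carrier G A \<Longrightarrow> gr_diff a b \<in> gr_carrier G A"
  unfolding gr_carrier_def gr_diff_def closedR_def by (auto simp del: minus_apply) (metis diff_conv_add_uminus)

lemma gr_one_carrier: "closedR A \<Longrightarrow> gr_one G \<in> gr_carrier G A"
  unfolding gr_carrier_def gr_one_def closedR_def by auto

lemma gr_of_carrier: "closedR A \<Longrightarrow> a \<in> carrier G \<Longrightarrow> gr_of G a \<in> gr_carrier G A"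
  unfolding gr_carrier_def gr_of_def closedR_def by auto

lemma tilde_carrier: "closedR A \<Longrightarrow> finite H \<Longrightarrow> H \<subseteq> gr_carrier G A \<Longrightarrow> tilde H \<in> gr_carrier G A"
  unfolding tilde_def gr_carrier_def by (auto intro!: closedR_sum sum.neutral)

lemma gr_monoid: "closedR A \<Longrightarrow> monoid (group_ring G A)"
  by (rule monoidI) (auto simp: group_ring_def gr_mult_carrier gr_one_carrier gr_assoc
         gr_one_left gr_one_right gz_carrier)

end

locale hctx = fgroup +
  fixes A :: "'f::field_char_0 set" and H :: "('a \<Rightarrow> 'f) set"
  assumes Acl: "closedR A" and Hsub: "subgroup H (units_of (group_ring G A))" and finH: "finite H"
begin

lemma mon: "monoid (group_ring G A)" by (rule gr_monoid[OF Acl])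

lemma H_carrier: "h \<in> H \<Longrightarrow> h \<in> gr_carrier G A"
  using subgroup.subset[OF Hsub] monoid.Units_closed[OF mon]
  by (auto simp: units_of_carrier group_ring_def)

lemma H_gz[simp]: "h \<in> H \<Longrightarrow> gz G h"
  using H_carrier gz_carrier by blast

lemma H_mult: "h \<in> H \<Longrightarrow> k \<in> H \<Longrightarrow> gr_mult G h k \<in> H"
  using subgroup.m_closed[OF Hsub] by (auto simp: units_of_mult group_ring_def)

lemma H_one: "gr_one G \<in> H"
  using subgroup.one_closed[OF Hsub] by (auto simp: units_of_one group_ring_def)

lemma H_inv: "h \<in> H \<Longrightarrow> \<exists>h'\<in>H. gr_mult G h h' = gr_one G \<and> gr_mult G h' h = gr_one G"
proof -
  assume h: "h \<in> H"
  have ug: "group (units_of (group_ring G A))" by (rule monoid.units_group[OF mon])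
  have hc: "h \<in> carrier (units_of (group_ring G A))" using h subgroup.subset[OF Hsub] by auto
  show ?thesis
    using subgroup.m_inv_closed[OF Hsub h] group.l_inv[OF ug hc] group.r_inv[OF ug hc]
    by (auto simp: units_of_mult units_of_one group_ring_def)
qed

abbreviation "T \<equiv> tilde H"

lemma T_gz[simp]: "gz G T"
  using tilde_carrier[OF Acl finH] H_carrier gz_carrier by blast

lemma T_carrier: "T \<in> gr_carrier G A"
  using tilde_carrier[OF Acl finH] H_carrier by blast

lemma TH: assumes h: "h \<in> H" shows "gr_mult G T h = T"
proof -
  obtain h' where h': "h' \<in> H" "gr_mult G h h' = gr_one G" "gr_mult G h' h = gr_one G"
    using H_inv[OF h] by blast
  have bij: "bij_betw (\<lambda>j. gr_mult G j h) H H"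
  proof (rule bij_betwI[where g = "\<lambda>j. gr_mult G j h'"])
    show "(\<lambda>j. gr_mult G j h) \<in> H \<rightarrow> H" using h H_mult by auto
    show "(\<lambda>j. gr_mult G j h') \<in> H \<rightarrow> H" using h' H_mult by auto
    show "gr_mult G (gr_mult G x h) h' = x" if "x \<in> H" for x
      using that h' by (simp add: gr_assoc gr_one_right)
    show "gr_mult G (gr_mult G y h') h = y" if "y \<in> H" for y
      using that h' by (simp add: gr_assoc gr_one_right)
  qed
  have "gr_mult G T h = (\<lambda>k. \<Sum>j\<in>H. gr_mult G j h k)"
    unfolding tilde_def using sum_left[OF finH, of "\<lambda>j. j"] by simp
  also have "\<dots> = (\<lambda>k. \<Sum>j\<in>H. j k)"
    using sum.reindex_bij_betw[OF bij] by (auto simp: fun_eq_iff)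
  finally show ?thesis by (simp add: tilde_def)
qed

lemma HT: assumes h: "h \<in> H" shows "gr_mult G h T = T"
proof -
  obtain h' where h': "h' \<in> H" "gr_mult G h h' = gr_one G" "gr_mult G h' h = gr_one G"
    using H_inv[OF h] by blast
  have bij: "bij_betw (\<lambda>j. gr_mult G h j) H H"
  proof (rule bij_betwI[where g = "\<lambda>j. gr_mult G h' j"])
    show "(\<lambda>j. gr_mult G h j) \<in> H \<rightarrow> H" using h H_mult by auto
    show "(\<lambda>j. gr_mult G h' j) \<in> H \<rightarrow> H" using h' H_mult by auto
    show "gr_mult G h' (gr_mult G h x) = x" if "x \<in> H" for x
      using that h' by (simp add: gr_assoc[symmetric] gr_one_left)
    show "gr_mult G h (gr_mult G h' y) = y" if "y \<in> H" for y
      using that h' by (simp add: gr_assoc[symmetric] gr_one_left)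
  qed
  have "gr_mult G h T = (\<lambda>k. \<Sum>j\<in>H. gr_mult G h j k)"
    unfolding tilde_def using sum_right[OF finH, of h "\<lambda>j. j"] by simp
  also have "\<dots> = (\<lambda>k. \<Sum>j\<in>H. j k)"
    using sum.reindex_bij_betw[OF bij] by (auto simp: fun_eq_iff)
  finally show ?thesis by (simp add: tilde_def)
qed

lemma TT: "gr_mult G T T = smul (of_nat (card H)) T"
proof -
  have "gr_mult G T T = (\<lambda>k. \<Sum>j\<in>H. gr_mult G j T k)"
    unfolding tilde_def using sum_left[OF finH, of "\<lambda>j. j"] by simp
  also have "\<dots> = (\<lambda>k. \<Sum>j\<in>H. T k)" using HT by simp
  finally show ?thesis by (simp add: smul_def)
qed

lemma cardH: "(of_nat (card H) :: 'f) \<noteq> 0"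
  using H_one finH by (auto simp: card_eq_0_iff)

definition "ee = smul (inverse (of_nat (card H))) T"

lemma ee_gz[simp]: "gz G ee" by (simp add: ee_def)

lemma eeH: "h \<in> H \<Longrightarrow> gr_mult G ee h = ee"
  by (simp add: ee_def smul_left TH)

lemma Hee: "h \<in> H \<Longrightarrow> gr_mult G h ee = ee"
  by (simp add: ee_def smul_right HT)

lemma Tee: "gr_mult G T ee = T"
  using cardH by (simp add: ee_def smul_right TT) (simp add: smul_def fun_eq_iff)

lemma eeT: "gr_mult G ee T = T"
  using cardH by (simp add: ee_def smul_left TT) (simp add: smul_def fun_eq_iff)

definition "cc = gr_diff (gr_one G) ee"

lemma cc_gz[simp]: "gz G cc" by (simp add: cc_def)

lemma ccT: "gr_mult G cc T = (\<lambda>_. 0)"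
  by (simp add: cc_def gr_diff_left gr_one_left eeT) (simp add: gr_diff_def)

lemma ccT': "gr_mult G cc (gr_mult G T bb) = (\<lambda>_. 0)"
  by (simp add: gr_assoc[symmetric] ccT)

lemma Tcc: "gr_mult G T cc = (\<lambda>_. 0)"
  by (simp add: cc_def gr_diff_right gr_one_right Tee) (simp add: gr_diff_def)

lemma conj_left:
  assumes x: "gz G x"
  shows "\<exists>u v. gz G u \<and> gz G v \<and> gr_mult G u v = gr_one G \<and> gr_mult G v u = gr_one G
      \<and> (\<forall>h\<in>H. psi_left G H x h = gr_mult G (gr_mult G v h) u)"
proof -
  define F where "F = gr_mult G T x"
  define a where "a = gr_mult G F cc"
  have Fgz[simp]: "gz G F" "gz G a" by (simp_all add: F_def a_def)
  have aa: "gr_mult G a a = (\<lambda>_. 0)"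
    unfolding a_def F_def by (simp add: gr_assoc ccT')
  have ha: "h \<in> H \<Longrightarrow> gr_mult G h a = a" for h
    unfolding a_def F_def by (simp add: gr_assoc[symmetric] HT)
  have ah: "h \<in> H \<Longrightarrow> gr_mult G a h = gr_mult G F (gr_diff h ee)" for h
    unfolding a_def cc_def by (simp add: gr_assoc gr_diff_left gr_one_left eeH)
  define u where "u = gr_add (gr_one G) a"
  define v where "v = gr_diff (gr_one G) a"
  have "gr_mult G u v = gr_one G"
    unfolding u_def v_def
    by (simp add: gr_add_left gr_diff_right gr_one_left gr_one_right aa)
       (simp add: gr_add_def gr_diff_def fun_eq_iff)
  moreover have "gr_mult G v u = gr_one G"
    unfolding u_def v_def
    by (simp add: gr_diff_left gr_add_right gr_one_left gr_one_right aa)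
       (simp add: gr_add_def gr_diff_def fun_eq_iff)
  moreover have "psi_left G H x h = gr_mult G (gr_mult G v h) u" if h: "h \<in> H" for h
  proof -
    have "gr_mult G (gr_mult G v h) u = gr_add (gr_diff h (gr_mult G a h)) (gr_diff a (gr_mult G a (gr_mult G h a)))"
      unfolding u_def v_def using h
      by (simp add: gr_diff_left gr_add_right gr_one_left gr_one_right gr_diff_right gr_assoc ha)
    also have "\<dots> = psi_left G H x h"
      using h unfolding psi_left_def ah[OF h] ha[OF h] aa F_def[symmetric]
      unfolding a_def cc_def
      by (simp add: gr_diff_right gr_one_right) (simp add: gr_add_def gr_diff_def fun_eq_iff)
    finally show ?thesis by simp
  qed
  ultimately show ?thesis by (intro exI[of _ u] exI[of _ v]) (simp add: u_def v_def)
qed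

lemma Tcc': "gr_mult G (gr_mult G bb T) cc = (\<lambda>_. 0)"
  by (simp add: gr_assoc Tcc)

lemma conj_right:
  assumes x: "gz G x"
  shows "\<exists>u v. gz G u \<and> gz G v \<and> gr_mult G u v = gr_one G \<and> gr_mult G v u = gr_one G
      \<and> (\<forall>h\<in>H. psi_right G x H h = gr_mult G (gr_mult G v h) u)"
proof -
  define F where "F = gr_mult G x T"
  define a where "a = gr_mult G cc F"
  have Fgz[simp]: "gz G F" "gz G a" by (simp_all add: F_def a_def)
  have aa: "gr_mult G a a = (\<lambda>_. 0)"
    unfolding a_def F_def by (simp add: gr_assoc[symmetric] Tcc')
  have ah: "h \<in> H \<Longrightarrow> gr_mult G a h = a" for h
    unfolding a_def F_def by (simp add: gr_assoc TH)
  have ha: "h \<in> H \<Longrightarrow> gr_mult G h a = gr_mult G (gr_diff h ee) F" for h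
    unfolding a_def cc_def by (simp add: gr_assoc[symmetric] gr_diff_right gr_one_right Hee)
  define u where "u = gr_diff (gr_one G) a"
  define v where "v = gr_add (gr_one G) a"
  have "gr_mult G u v = gr_one G"
    unfolding u_def v_def
    by (simp add: gr_diff_left gr_add_right gr_one_left gr_one_right aa)
       (simp add: gr_add_def gr_diff_def fun_eq_iff)
  moreover have "gr_mult G v u = gr_one G"
    unfolding u_def v_def
    by (simp add: gr_add_left gr_diff_right gr_one_left gr_one_right aa)
       (simp add: gr_add_def gr_diff_def fun_eq_iff)
  moreover have "psi_right G x H h = gr_mult G (gr_mult G v h) u" if h: "h \<in> H" for h
  proof -
    have "gr_mult G (gr_mult G v h) u = gr_diff (gr_add h a) (gr_add (gr_mult G h a) (gr_mult G a a))"
      unfolding u_def v_def using h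
      by (simp add: gr_add_left gr_diff_right gr_one_left gr_one_right gr_add_right gr_assoc ah)
    also have "\<dots> = psi_right G x H h"
      using h unfolding psi_right_def ah[OF h] ha[OF h] aa
      unfolding a_def cc_def F_def
      by (simp add: gr_diff_left gr_one_left gr_assoc) (simp add: gr_add_def gr_diff_def fun_eq_iff)
    finally show ?thesis by simp
  qed
  ultimately show ?thesis by (intro exI[of _ u] exI[of _ v]) (simp add: u_def v_def)
qed

lemma conj_cons:
  assumes u: "gz G u" and v: "gz G v" and uv: "gr_mult G u v = gr_one G" and vu: "gr_mult G v u = gr_one G"
    and ps: "\<And>h. h \<in> H \<Longrightarrow> psi h = gr_mult G (gr_mult G v h) u"
    and pc: "\<And>h. h \<in> H \<Longrightarrow> psi h \<in> gr_carrier G A"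
  shows "psi \<in> hom ((units_of (group_ring G A))\<lparr>carrier := H\<rparr>) (units_of (group_ring G A))
     \<and> inj_on psi H
     \<and> (\<exists>u\<in>Units (group_ring G UNIV).
          (\<lambda>h. inv\<^bsub>group_ring G UNIV\<^esub> u \<otimes>\<^bsub>group_ring G UNIV\<^esub> h \<otimes>\<^bsub>group_ring G UNIV\<^esub> u) ` H
            = psi ` H)"
proof (intro conjI)
  have mul: "psi (gr_mult G h k) = gr_mult G (psi h) (psi k)" if "h \<in> H" "k \<in> H" for h k
  proof -
    have "gr_mult G (psi h) (psi k) = gr_mult G (gr_mult G v (gr_mult G h (gr_mult G (gr_mult G u v) k))) u"
      using that by (simp add: ps gr_assoc)
    also have "\<dots> = psi (gr_mult G h k)"
      using that H_mult by (simp add: uv gr_one_left ps gr_assoc)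
    finally show ?thesis by simp
  qed
  have ps1: "psi (gr_one G) = gr_one G"
    using H_one by (simp add: ps gr_one_right v vu)
  have unit: "psi h \<in> Units (group_ring G A)" if h: "h \<in> H" for h
  proof -
    obtain h' where h': "h' \<in> H" "gr_mult G h h' = gr_one G" "gr_mult G h' h = gr_one G"
      using H_inv[OF h] by blast
    have "gr_mult G (psi h) (psi h') = gr_one G" "gr_mult G (psi h') (psi h) = gr_one G"
      using mul[OF h h'(1)] mul[OF h'(1) h] h' ps1 by simp_all
    then show ?thesis using pc[OF h] pc[OF h'(1)]
      unfolding Units_def by (auto simp: group_ring_def)
  qed
  show "psi \<in> hom ((units_of (group_ring G A))\<lparr>carrier := H\<rparr>) (units_of (group_ring G A))"
    unfolding hom_def using unit mul by (auto simp: units_of_carrier units_of_mult group_ring_def)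
  show "inj_on psi H"
  proof (rule inj_onI)
    fix h k assume h: "h \<in> H" and k: "k \<in> H" and eq: "psi h = psi k"
    have "h = gr_mult G u (gr_mult G (psi h) v)"
      using h by (simp add: ps gr_assoc[symmetric] uv gr_one_left) (simp add: gr_assoc uv gr_one_right)
    also have "\<dots> = k"
      using k by (simp add: eq ps gr_assoc[symmetric] uv gr_one_left) (simp add: gr_assoc uv gr_one_right)
    finally show "h = k" .
  qed
  have m: "monoid (group_ring G UNIV)" by (rule gr_monoid[OF closedR_UNIV])
  have uc: "u \<in> carrier (group_ring G UNIV)" "v \<in> carrier (group_ring G UNIV)"
    using u v by (simp_all add: group_ring_def gr_carrier_UNIV)
  have iv: "v = inv\<^bsub>group_ring G UNIV\<^esub> u"
    using monoid.inv_unique'[OF m uc] uv vu by (simp add: group_ring_def)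
  have uU: "u \<in> Units (group_ring G UNIV)"
    using uc uv vu unfolding Units_def by (auto simp: group_ring_def)
  show "\<exists>u\<in>Units (group_ring G UNIV).
          (\<lambda>h. inv\<^bsub>group_ring G UNIV\<^esub> u \<otimes>\<^bsub>group_ring G UNIV\<^esub> h \<otimes>\<^bsub>group_ring G UNIV\<^esub> u) ` H
            = psi ` H"
  proof (rule bexI[OF _ uU])
    show "(\<lambda>h. inv\<^bsub>group_ring G UNIV\<^esub> u \<otimes>\<^bsub>group_ring G UNIV\<^esub> h \<otimes>\<^bsub>group_ring G UNIV\<^esub> u) ` H = psi ` H"
      unfolding iv[symmetric] by (rule image_cong) (simp_all add: ps group_ring_def)
  qed
qed

end

context fgroup begin
lemma gr_of_inj: "gr_of G a = gr_of G b \<Longrightarrow> a = b"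
  by (metis gr_of_def one_neq_zero)
end

locale hctx2 = hctx +
  assumes HinG: "H \<subseteq> gr_of G ` carrier G"
begin

definition "HG = {a \<in> carrier G. gr_of G a \<in> H}"

lemma H_eq: "H = gr_of G ` HG"
  using HinG by (auto simp: HG_def)

lemma H_mem: "h \<in> H \<longleftrightarrow> (\<exists>b\<in>HG. h = gr_of G b)"
  using HinG by (auto simp: HG_def)

lemma HG_sub: "HG \<subseteq> carrier G" by (auto simp: HG_def)

lemma HG_one: "\<one> \<in> HG"
  using H_one by (simp add: HG_def gr_one_of)

lemma HG_mult: "a \<in> HG \<Longrightarrow> b \<in> HG \<Longrightarrow> a \<otimes> b \<in> HG"
  using H_mult[of "gr_of G a" "gr_of G b"] by (simp add: HG_def gr_of_mult)

lemma HG_inv: assumes a: "a \<in> HG" shows "inv a \<in> HG"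
proof -
  obtain h' where h': "h' \<in> H" "gr_mult G (gr_of G a) h' = gr_one G"
    using H_inv[of "gr_of G a"] a by (auto simp: HG_def)
  obtain b where b: "b \<in> HG" "h' = gr_of G b" using h'(1) H_eq by auto
  have ac: "a \<in> carrier G" and bc: "b \<in> carrier G" using a b HG_sub by auto
  have "gr_mult G (gr_of G a) h' (a \<otimes> b) = gr_one G (a \<otimes> b)"
    using h'(2) by simp
  then have "a \<otimes> b = \<one>" unfolding b(2) gr_of_mult[OF ac bc]
    by (simp add: gr_one_def gr_of_def split: if_splits)
  then have "b = inv a" using ac bc
    by (metis inv_equality inv_inv inv_closed)
  then show ?thesis using b by simp
qed

lemma HG_fin: "finite HG"
proof -
  have "inj_on (gr_of G) HG" by (auto intro: inj_onI gr_of_inj)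
  then show ?thesis using finH H_eq finite_image_iff by metis
qed

lemma T_val: "T k = (if k \<in> HG then 1 else 0)"
proof -
  have "T k = (\<Sum>h\<in>gr_of G ` HG. h k)"
    by (simp add: tilde_def H_eq[symmetric])
  also have "\<dots> = (\<Sum>a\<in>HG. gr_of G a k)"
    by (subst sum.reindex) (auto intro: inj_onI gr_of_inj)
  also have "\<dots> = (\<Sum>a\<in>HG. if k = a then 1 else 0)"
    by (intro sum.cong) (auto simp: gr_of_def)
  also have "\<dots> = (if k \<in> HG then 1 else 0)" using HG_fin by simp
  finally show ?thesis .
qed

lemma p1_val:
  assumes g: "g \<in> carrier G" and b: "b \<in> carrier G" and k: "k \<in> carrier G"
  shows "psi_left G H (gr_of G g) (gr_of G b) k
     = (if k = b then 1 else 0) + T (k \<otimes> inv g) - T (k \<otimes> inv (g \<otimes> b))"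
  unfolding psi_left_def using g b k
  by (simp add: gr_diff_right gr_one_right gr_assoc gr_of_mult)
     (simp add: gr_of_right gr_add_def gr_diff_def, simp add: gr_of_def)

lemma p2_val:
  assumes g: "g \<in> carrier G" and b: "b \<in> carrier G" and k: "k \<in> carrier G"
  shows "psi_right G (gr_of G (inv g)) H (gr_of G b) k
     = (if k = b then 1 else 0) + T (g \<otimes> k) - T (inv (b \<otimes> inv g) \<otimes> k)"
  unfolding psi_right_def using g b k
  by (simp add: gr_diff_left gr_one_left gr_of_mult)
     (simp add: gr_of_left gr_add_def gr_diff_def, simp add: gr_of_def)

lemma inv_cancel1[simp]: "x \<in> carrier G \<Longrightarrow> z \<in> carrier G \<Longrightarrow> inv x \<otimes> (x \<otimes> z) = z"
  by (simp add: m_assoc[symmetric])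

lemma inv_cancel2[simp]: "x \<in> carrier G \<Longrightarrow> z \<in> carrier G \<Longrightarrow> x \<otimes> (inv x \<otimes> z) = z"
  by (simp add: m_assoc[symmetric])

lemma HG_c: "a \<in> HG \<Longrightarrow> a \<in> carrier G" using HG_sub by auto

lemma HG_rmult: assumes x: "x \<in> carrier G" and d: "d \<in> HG" shows "x \<otimes> d \<in> HG \<longleftrightarrow> x \<in> HG"
proof
  assume "x \<otimes> d \<in> HG"
  then have "(x \<otimes> d) \<otimes> inv d \<in> HG" using HG_mult HG_inv d by blast
  then show "x \<in> HG" using x HG_c[OF d] by (simp add: m_assoc)
qed (use HG_mult d in blast)

lemma HG_lmult: assumes x: "x \<in> carrier G" and d: "d \<in> HG" shows "d \<otimes> x \<in> HG \<longleftrightarrow> x \<in> HG"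
proof
  assume "d \<otimes> x \<in> HG"
  then have "inv d \<otimes> (d \<otimes> x) \<in> HG" using HG_mult HG_inv d by blast
  then show "x \<in> HG" using x HG_c[OF d] by simp
qed (use HG_mult d in blast)

lemma p1_gz: "b \<in> carrier G \<Longrightarrow> gz G (psi_left G H (gr_of G g) (gr_of G b))"
  unfolding psi_left_def by simp

lemma p2_gz: "b \<in> carrier G \<Longrightarrow> gz G (psi_right G (gr_of G (inv g)) H (gr_of G b))"
  unfolding psi_right_def by simp

lemma gz_ext: "gz G f1 \<Longrightarrow> gz G f2 \<Longrightarrow> (\<And>k. k \<in> carrier G \<Longrightarrow> f1 k = f2 k) \<Longrightarrow> f1 = f2"
  unfolding gz_def by (metis ext)

lemma fix1:
  assumes g: "g \<in> carrier G" and b: "b \<in> HG" and C: "g \<otimes> b \<otimes> inv g \<in> HG"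
  shows "psi_left G H (gr_of G g) (gr_of G b) = gr_of G b"
proof (rule gz_ext)
  have bc: "b \<in> carrier G" using HG_c[OF b] .
  show "gz G (psi_left G H (gr_of G g) (gr_of G b))" using p1_gz[OF bc] .
  show "gz G (gr_of G b)" using bc by simp
  fix k assume k: "k \<in> carrier G"
  have d: "inv (g \<otimes> b \<otimes> inv g) \<in> HG" using HG_inv[OF C] .
  have eq: "k \<otimes> inv (g \<otimes> b) = (k \<otimes> inv g) \<otimes> inv (g \<otimes> b \<otimes> inv g)"
    using g bc k by (simp add: inv_mult_group m_assoc)
  have "T (k \<otimes> inv (g \<otimes> b)) = T (k \<otimes> inv g)"
    unfolding T_val eq using HG_rmult[OF _ d, of "k \<otimes> inv g"] g k by simp
  then show "psi_left G H (gr_of G g) (gr_of G b) k = gr_of G b k"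
    using p1_val[OF g bc k] by (simp add: gr_of_def)
qed

lemma fix2:
  assumes g: "g \<in> carrier G" and b: "b \<in> HG" and C: "g \<otimes> b \<otimes> inv g \<in> HG"
  shows "psi_right G (gr_of G (inv g)) H (gr_of G b) = gr_of G b"
proof (rule gz_ext)
  have bc: "b \<in> carrier G" using HG_c[OF b] .
  show "gz G (psi_right G (gr_of G (inv g)) H (gr_of G b))" using p2_gz[OF bc] .
  show "gz G (gr_of G b)" using bc by simp
  fix k assume k: "k \<in> carrier G"
  have d: "inv (g \<otimes> b \<otimes> inv g) \<in> HG" using HG_inv[OF C] .
  have eq: "inv (b \<otimes> inv g) \<otimes> k = inv (g \<otimes> b \<otimes> inv g) \<otimes> (g \<otimes> k)"
    using g bc k by (simp add: inv_mult_group m_assoc)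
  have "T (inv (b \<otimes> inv g) \<otimes> k) = T (g \<otimes> k)"
    unfolding T_val eq using HG_lmult[OF _ d, of "g \<otimes> k"] g k by simp
  then show "psi_right G (gr_of G (inv g)) H (gr_of G b) k = gr_of G b k"
    using p2_val[OF g bc k] by (simp add: gr_of_def)
qed

lemma nofix:
  assumes g: "g \<in> carrier G" and b: "b \<in> HG" and c: "c \<in> HG"
    and Cb: "g \<otimes> b \<otimes> inv g \<notin> HG" and Cc: "g \<otimes> c \<otimes> inv g \<notin> HG"
    and eq: "psi_left G H (gr_of G g) (gr_of G b) = psi_right G (gr_of G (inv g)) H (gr_of G c)"
  shows False
proof -
  have bc: "b \<in> carrier G" using HG_c[OF b] .
  have cc: "c \<in> carrier G" using HG_c[OF c] .
  have gH: "g \<notin> HG" using Cb HG_mult HG_inv b by blast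
  have gb: "g \<otimes> b \<in> carrier G" using g bc by simp
  have e1: "psi_left G H (gr_of G g) (gr_of G b) (g \<otimes> b) = psi_right G (gr_of G (inv g)) H (gr_of G c) (g \<otimes> b)"
    using eq by simp
  have e2: "psi_left G H (gr_of G g) (gr_of G b) g = psi_right G (gr_of G (inv g)) H (gr_of G c) g"
    using eq by simp
  have n1: "g \<otimes> b \<noteq> b" using g bc gH HG_one by auto
  have n2: "g \<otimes> b \<otimes> inv g \<notin> HG" by (rule Cb)
  have n3: "g \<otimes> b \<otimes> inv (g \<otimes> b) \<in> HG" using gb HG_one by simp
  have v1: "psi_left G H (gr_of G g) (gr_of G b) (g \<otimes> b) = - 1"
    unfolding p1_val[OF g bc gb] T_val using n1 n2 n3 by simp
  have ggb: "g \<otimes> (g \<otimes> b) = (g \<otimes> g) \<otimes> b" using g bc by (simp add: m_assoc)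
  have "g \<otimes> (g \<otimes> b) \<notin> HG"
  proof
    assume a: "g \<otimes> (g \<otimes> b) \<in> HG"
    have "psi_right G (gr_of G (inv g)) H (gr_of G c) (g \<otimes> b) \<noteq> - 1"
      unfolding p2_val[OF g cc gb] T_val using a by (auto split: if_splits)
    then show False using e1 v1 by simp
  qed
  then have gg: "g \<otimes> g \<notin> HG" unfolding ggb using HG_rmult[OF _ b, of "g \<otimes> g"] g by simp
  have m1: "g \<noteq> b" using gH b by auto
  have m2: "g \<otimes> inv g \<in> HG" using g HG_one by simp
  have m3: "g \<otimes> inv (g \<otimes> b) \<notin> HG"
  proof
    assume "g \<otimes> inv (g \<otimes> b) \<in> HG"
    then have "inv (g \<otimes> inv (g \<otimes> b)) \<in> HG" by (rule HG_inv)
    moreover have "inv (g \<otimes> inv (g \<otimes> b)) = g \<otimes> b \<otimes> inv g"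
      using g bc by (simp add: inv_mult_group m_assoc)
    ultimately show False using Cb by simp
  qed
  have v2: "psi_left G H (gr_of G g) (gr_of G b) g = 1"
    unfolding p1_val[OF g bc g] T_val using m1 m2 m3 by simp
  have m4: "g \<noteq> c" using gH c by auto
  have "psi_right G (gr_of G (inv g)) H (gr_of G c) g \<noteq> 1"
    unfolding p2_val[OF g cc g] T_val using m4 gg by (auto split: if_splits)
  then show False using e2 v2 by simp
qed

lemma part3:
  assumes g: "g \<in> carrier G"
  shows "(let Hg = (\<lambda>h. gr_of G (inv g) \<otimes>\<^bsub>group_ring G A\<^esub> h \<otimes>\<^bsub>group_ring G A\<^esub> gr_of G g) ` H;
                  p1 = psi_left G H (gr_of G g);
                  p2 = psi_right G (gr_of G (inv g)) H
              in (\<forall>h\<in>H \<inter> Hg. p1 h = h \<and> p2 h = h)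
                 \<and> p1 ` H \<inter> p2 ` H = H \<inter> Hg)"
proof -
  define Hg where "Hg = (\<lambda>h. gr_of G (inv g) \<otimes>\<^bsub>group_ring G A\<^esub> h \<otimes>\<^bsub>group_ring G A\<^esub> gr_of G g) ` H"
  define p1 where "p1 = psi_left G H (gr_of G g)"
  define p2 where "p2 = psi_right G (gr_of G (inv g)) H"
  have Hg_eq: "Hg = gr_of G ` ((\<lambda>a. inv g \<otimes> a \<otimes> g) ` HG)"
  proof -
    have "Hg = (\<lambda>h. gr_mult G (gr_mult G (gr_of G (inv g)) h) (gr_of G g)) ` (gr_of G ` HG)"
      unfolding Hg_def H_eq[symmetric] by (simp add: group_ring_def)
    also have "\<dots> = gr_of G ` ((\<lambda>a. inv g \<otimes> a \<otimes> g) ` HG)"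
      unfolding image_image using g HG_c by (intro image_cong) (simp_all add: gr_of_mult)
    finally show ?thesis .
  qed
  have mem: "gr_of G b \<in> Hg \<longleftrightarrow> g \<otimes> b \<otimes> inv g \<in> HG" if b: "b \<in> carrier G" for b
  proof
    assume "gr_of G b \<in> Hg"
    then obtain a where a: "a \<in> HG" "b = inv g \<otimes> a \<otimes> g"
      unfolding Hg_eq by (auto dest: gr_of_inj)
    then show "g \<otimes> b \<otimes> inv g \<in> HG" using g HG_c[OF a(1)] by (simp add: m_assoc)
  next
    assume a: "g \<otimes> b \<otimes> inv g \<in> HG"
    have "b = inv g \<otimes> (g \<otimes> b \<otimes> inv g) \<otimes> g" using g b by (simp add: m_assoc)
    then show "gr_of G b \<in> Hg" unfolding Hg_eq using a by blast
  qed
  have HHg: "h \<in> H \<inter> Hg \<longleftrightarrow> (\<exists>b\<in>HG. h = gr_of G b \<and> g \<otimes> b \<otimes> inv g \<in> HG)" for h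
  proof
    assume "h \<in> H \<inter> Hg"
    then obtain b where "b \<in> HG" "h = gr_of G b" "h \<in> Hg" using H_mem by auto
    then show "\<exists>b\<in>HG. h = gr_of G b \<and> g \<otimes> b \<otimes> inv g \<in> HG" using mem HG_c by auto
  next
    assume "\<exists>b\<in>HG. h = gr_of G b \<and> g \<otimes> b \<otimes> inv g \<in> HG"
    then obtain b where "b \<in> HG" "h = gr_of G b" "g \<otimes> b \<otimes> inv g \<in> HG" by auto
    then show "h \<in> H \<inter> Hg" using mem HG_c H_mem by auto
  qed
  have fx: "\<forall>h\<in>H \<inter> Hg. p1 h = h \<and> p2 h = h"
  proof
    fix h assume "h \<in> H \<inter> Hg"
    then obtain b where "b \<in> HG" "h = gr_of G b" "g \<otimes> b \<otimes> inv g \<in> HG" unfolding HHg by blast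
    then show "p1 h = h \<and> p2 h = h" unfolding p1_def p2_def using fix1[OF g] fix2[OF g] by simp
  qed
  have "p1 ` H \<inter> p2 ` H = H \<inter> Hg"
  proof
    show "H \<inter> Hg \<subseteq> p1 ` H \<inter> p2 ` H"
    proof
      fix h assume h: "h \<in> H \<inter> Hg"
      then have "h = p1 h" "h = p2 h" using fx by auto
      then show "h \<in> p1 ` H \<inter> p2 ` H" using h by (metis IntD1 IntI imageI)
    qed
    show "p1 ` H \<inter> p2 ` H \<subseteq> H \<inter> Hg"
    proof
      fix f assume "f \<in> p1 ` H \<inter> p2 ` H"
      then obtain h1 h2 where "h1 \<in> H" "h2 \<in> H" and f12: "f = p1 h1" "f = p2 h2" by auto
      then obtain b c where b: "b \<in> HG" and c: "c \<in> HG" and f1: "f = p1 (gr_of G b)" and f2: "f = p2 (gr_of G c)"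
        unfolding H_mem by auto
      show "f \<in> H \<inter> Hg"
      proof (cases "g \<otimes> b \<otimes> inv g \<in> HG")
        case True
        then show ?thesis using f1 fix1[OF g b True] b unfolding p1_def HHg by auto
      next
        case nb: False
        show ?thesis
        proof (cases "g \<otimes> c \<otimes> inv g \<in> HG")
          case True
          then show ?thesis using f2 fix2[OF g c True] c unfolding p2_def HHg by auto
        next
          case False
          then show ?thesis using nofix[OF g b c nb False] f1 f2 unfolding p1_def p2_def by simp
        qed
      qed
    qed
  qed
  then show ?thesis using fx unfolding Let_def Hg_def p1_def p2_def by simp
qed

end

theorem proposition6p2:
  fixes G :: "('g,'b) monoid_scheme" (structure)
    and R :: "'f::field_char_0 set"
    and H :: "('g \<Rightarrow> 'f) set"
    and x :: "'g \<Rightarrow> 'f"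
  assumes nf: "number_field TYPE('f)"
    and ord: "is_order R"
    and grp: "group G" and finG: "finite (carrier G)"
    and finH: "finite H"
    and HV: "H \<subseteq> gr_V G R"
    and Hsub: "subgroup H (units_of (group_ring G R))"
    and x: "x \<in> carrier (group_ring G R)"
  shows
    \<comment> \<open>(i)\<close>
    "(psi_left G H x \<in> hom ((units_of (group_ring G R))\<lparr>carrier := H\<rparr>) (units_of (group_ring G R))
        \<and> inj_on (psi_left G H x) H)
     \<and> (psi_right G x H \<in> hom ((units_of (group_ring G R))\<lparr>carrier := H\<rparr>) (units_of (group_ring G R))
        \<and> inj_on (psi_right G x H) H)
     \<comment> \<open>(ii)\<close>
     \<and> (\<exists>u\<in>Units (group_ring G UNIV).
          (\<lambda>h. inv\<^bsub>group_ring G UNIV\<^esub> u \<otimes>\<^bsub>group_ring G UNIV\<^esub> h \<otimes>\<^bsub>group_ring G UNIV\<^esub> u) ` H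
            = psi_left G H x ` H)
     \<and> (\<exists>u\<in>Units (group_ring G UNIV).
          (\<lambda>h. inv\<^bsub>group_ring G UNIV\<^esub> u \<otimes>\<^bsub>group_ring G UNIV\<^esub> h \<otimes>\<^bsub>group_ring G UNIV\<^esub> u) ` H
            = psi_right G x H ` H)
     \<comment> \<open>(iii)\<close>
     \<and> (H \<subseteq> gr_of G ` carrier G \<longrightarrow>
          (\<forall>g\<in>carrier G.
             (let Hg = (\<lambda>h. gr_of G (inv g) \<otimes>\<^bsub>group_ring G R\<^esub> h \<otimes>\<^bsub>group_ring G R\<^esub> gr_of G g) ` H;
                  p1 = psi_left G H (gr_of G g);
                  p2 = psi_right G (gr_of G (inv g)) H
              in (\<forall>h\<in>H \<inter> Hg. p1 h = h \<and> p2 h = h)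
                 \<and> p1 ` H \<inter> p2 ` H = H \<inter> Hg)))"
proof -
  have fg: "fgroup G" by (rule fgroup.intro[OF grp]) (unfold_locales, rule finG)
  interpret fgroup G by (rule fg)
  have Acl: "closedR R" using ord unfolding is_order_def closedR_def by blast
  have hc: "hctx G R H" by (rule hctx.intro[OF fg]) (rule hctx_axioms.intro[OF Acl Hsub finH])
  interpret hctx G R H by (rule hc)
  have xc: "x \<in> gr_carrier G R" using x by (simp add: group_ring_def)
  have xg: "gz G x" using gz_carrier[OF xc] .
  have pcl: "psi_left G H x h \<in> gr_carrier G R" if h: "h \<in> H" for h
    unfolding psi_left_def
    by (intro gr_add_carrier[OF Acl] gr_mult_carrier[OF Acl] gr_diff_carrier[OF Acl]
          H_carrier[OF h] T_carrier xc gr_one_carrier[OF Acl])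
  have pcr: "psi_right G x H h \<in> gr_carrier G R" if h: "h \<in> H" for h
    unfolding psi_right_def
    by (intro gr_add_carrier[OF Acl] gr_mult_carrier[OF Acl] gr_diff_carrier[OF Acl]
          H_carrier[OF h] T_carrier xc gr_one_carrier[OF Acl])
  obtain u v where uv: "gz G u" "gz G v" "gr_mult G u v = gr_one G" "gr_mult G v u = gr_one G"
    and psl: "\<forall>h\<in>H. psi_left G H x h = gr_mult G (gr_mult G v h) u"
    using conj_left[OF xg] by blast
  obtain u' v' where uv': "gz G u'" "gz G v'" "gr_mult G u' v' = gr_one G" "gr_mult G v' u' = gr_one G"
    and psr: "\<forall>h\<in>H. psi_right G x H h = gr_mult G (gr_mult G v' h) u'"
    using conj_right[OF xg] by blast
  note L = conj_cons[OF uv, of "psi_left G H x"]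
  note Rr = conj_cons[OF uv', of "psi_right G x H"]
  have iii: "H \<subseteq> gr_of G ` carrier G \<longrightarrow>
          (\<forall>g\<in>carrier G.
             (let Hg = (\<lambda>h. gr_of G (inv g) \<otimes>\<^bsub>group_ring G R\<^esub> h \<otimes>\<^bsub>group_ring G R\<^esub> gr_of G g) ` H;
                  p1 = psi_left G H (gr_of G g);
                  p2 = psi_right G (gr_of G (inv g)) H
              in (\<forall>h\<in>H \<inter> Hg. p1 h = h \<and> p2 h = h)
                 \<and> p1 ` H \<inter> p2 ` H = H \<inter> Hg))"
  proof (intro impI ballI)
    fix g assume HG: "H \<subseteq> gr_of G ` carrier G" and g: "g \<in> carrier G"
    interpret hctx2 G R H by (rule hctx2.intro[OF hc]) (rule hctx2_axioms.intro[OF HG])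
    show "let Hg = (\<lambda>h. gr_of G (inv g) \<otimes>\<^bsub>group_ring G R\<^esub> h \<otimes>\<^bsub>group_ring G R\<^esub> gr_of G g) ` H;
                  p1 = psi_left G H (gr_of G g);
                  p2 = psi_right G (gr_of G (inv g)) H
              in (\<forall>h\<in>H \<inter> Hg. p1 h = h \<and> p2 h = h)
                 \<and> p1 ` H \<inter> p2 ` H = H \<inter> Hg"
      by (rule part3[OF g])
  qed
  show ?thesis using L Rr psl psr pcl pcr iii by blast
qed

end
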